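(* Let $i,j,k,s$ be distinct jobs such that $(i,k)$, $(j,k)$, $(s,i)$ and $(s,j)$ are all red pairs. Then, in the schedule produced by $1$-SORT, $D(i,j)\le\left(1+\frac{1}{\nu(\mu+1)}\right)D^*(i,j)$.
   Context: Setting: single machine, jobs $J=\{1,\dots,n\}$, each job $j$ with test time $t_j\ge0$ and processing time $p_j\ge0$ (revealed only when the test is executed); each job's test must be executed before its processing part, which may start any time after the test; operations are non-preemptive and the machine does one at a time. $\sigma_j=t_j+p_j$, $m_j=\max\{t_j,p_j\}$. Standing assumption (general position): no two of the $3n$ numbers $t_j,p_j,\sigma_j$ are equal. Algorithm $1$-SORT: keep a priority queue of available operations, initially the test of every job $j$ with priority $t_j$; repeatedly remove a minimum-priority operation and execute it immediately; after executing the test of $j$, insert the processing part of $j$ with priority $p_j$. For distinct jobs $j,k$, let $d_{k,j}$ be the total amount of time during which operations of $k$ are executed before the completion time of $j$, and $D(j,k)=d_{j,k}+d_{k,j}$, evaluated for the $1$-SORT schedule; $D^*(j,k)=\min\{\sigma_j,\sigma_k\}$. Fix constants $\mu>1$ and $0<\nu<1$ with $\mu\nu>1$ and $1+\frac1\mu\le\nu+\nu^2$. A job $j$ is imbalanced if $m_j\ge\mu\min\{t_j,p_j\}$. For distinct jobs $j,k$, the ordered pair $(j,k)$ is a red pair if $j$ is imbalanced, $m_j\ge t_k\ge\nu m_j$, and $p_k\ge\nu t_k$. *)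

theory Defs
  imports Complex_Main
begin

datatype 'a oper = Test 'a | Proc 'a

fun job :: "'a oper \<Rightarrow> 'a" where
  "job (Test j) = j"
| "job (Proc j) = j"

fun dur :: "('a \<Rightarrow> real) \<Rightarrow> ('a \<Rightarrow> real) \<Rightarrow> 'a oper \<Rightarrow> real" where
  "dur t p (Test j) = t j"
| "dur t p (Proc j) = p j"

definition prio :: "('a \<Rightarrow> real) \<Rightarrow> ('a \<Rightarrow> real) \<Rightarrow> 'a oper \<Rightarrow> real" where
  "prio t p = dur t p"

fun sort1_run :: "('a \<Rightarrow> real) \<Rightarrow> ('a \<Rightarrow> real) \<Rightarrow> nat \<Rightarrow> 'a oper set \<Rightarrow> 'a oper list" where
  "sort1_run t p 0 Q = []"
| "sort1_run t p (Suc n) Q =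
     (if Q = {} then []
      else (let q = (ARG_MIN (prio t p) x. x \<in> Q)
            in q # sort1_run t p n
                   ((Q - {q}) \<union> (case q of Test j \<Rightarrow> {Proc j} | Proc j \<Rightarrow> {}))))"

text \<open>The sequence of operations executed by 1-SORT on job set J (no idle time).\<close>
definition sort1_schedule :: "'a set \<Rightarrow> ('a \<Rightarrow> real) \<Rightarrow> ('a \<Rightarrow> real) \<Rightarrow> 'a oper list" where
  "sort1_schedule J t p = sort1_run t p (2 * card J) (Test ` J)"

text \<open>d k j: total time during which operations of k are executed before the completion
  time of j (the completion of the processing part of j) in the 1-SORT schedule.\<close>
definition dd :: "'a set \<Rightarrow> ('a \<Rightarrow> real) \<Rightarrow> ('a \<Rightarrow> real) \<Rightarrow> 'a \<Rightarrow> 'a \<Rightarrow> real" where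
  "dd J t p k j = sum_list (map (dur t p)
      (filter (\<lambda>q. job q = k) (takeWhile (\<lambda>q. q \<noteq> Proc j) (sort1_schedule J t p))))"

definition DD :: "'a set \<Rightarrow> ('a \<Rightarrow> real) \<Rightarrow> ('a \<Rightarrow> real) \<Rightarrow> 'a \<Rightarrow> 'a \<Rightarrow> real" where
  "DD J t p j k = dd J t p j k + dd J t p k j"

definition Dstar :: "('a \<Rightarrow> real) \<Rightarrow> ('a \<Rightarrow> real) \<Rightarrow> 'a \<Rightarrow> 'a \<Rightarrow> real" where
  "Dstar t p j k = min (t j + p j) (t k + p k)"

definition general_position :: "'a set \<Rightarrow> ('a \<Rightarrow> real) \<Rightarrow> ('a \<Rightarrow> real) \<Rightarrow> bool" where
  "general_position J t p \<longleftrightarrow>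
     (\<forall>j\<in>J. \<forall>k\<in>J.
        (t j = t k \<longrightarrow> j = k) \<and> (p j = p k \<longrightarrow> j = k) \<and>
        (t j + p j = t k + p k \<longrightarrow> j = k) \<and>
        t j \<noteq> p k \<and> t j \<noteq> t k + p k \<and> p j \<noteq> t k + p k)"

definition imbalanced :: "real \<Rightarrow> ('a \<Rightarrow> real) \<Rightarrow> ('a \<Rightarrow> real) \<Rightarrow> 'a \<Rightarrow> bool" where
  "imbalanced \<mu> t p j \<longleftrightarrow> max (t j) (p j) \<ge> \<mu> * min (t j) (p j)"

definition red_pair :: "real \<Rightarrow> real \<Rightarrow> ('a \<Rightarrow> real) \<Rightarrow> ('a \<Rightarrow> real) \<Rightarrow> 'a \<Rightarrow> 'a \<Rightarrow> bool" where
  "red_pair \<mu> \<nu> t p j k \<longleftrightarrow> j \<noteq> k \<and> imbalanced \<mu> t p j \<and>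
     max (t j) (p j) \<ge> t k \<and> t k \<ge> \<nu> * max (t j) (p j) \<and> p k \<ge> \<nu> * t k"

end

theory Submission
  imports Defs
begin

lemma am:
  fixes f :: "'b \<Rightarrow> real"
  assumes "finite Q" "Q \<noteq> {}"
  shows "(ARG_MIN f x. x \<in> Q) \<in> Q" "\<And>y. y \<in> Q \<Longrightarrow> f (ARG_MIN f x. x \<in> Q) \<le> f y"
  using arg_min_if_finite[OF assms, of f] arg_min_least[OF assms, of _ f]
  unfolding arg_min_on_def by auto

lemma runA:
  assumes "finite Q" "Test a \<in> Q \<or> Proc a \<in> Q" "t a < prio t p y" "p a < prio t p y"
    "y \<in> set (sort1_run t p n Q)"
  shows "Proc a \<in> set (takeWhile (\<lambda>q. q \<noteq> y) (sort1_run t p n Q))"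
  using assms
proof (induction n arbitrary: Q)
  case 0 then show ?case by simp
next
  case (Suc n)
  have ne: "Q \<noteq> {}" using Suc.prems(2) by auto
  define q where "q = (ARG_MIN (prio t p) x. x \<in> Q)"
  define Q' where "Q' = (Q - {q}) \<union> (case q of Test j \<Rightarrow> {Proc j} | Proc j \<Rightarrow> {})"
  have run: "sort1_run t p (Suc n) Q = q # sort1_run t p n Q'"
    using ne by (simp add: q_def Q'_def Let_def)
  have qQ: "q \<in> Q" using am(1)[OF Suc.prems(1) ne] q_def by simp
  have qmin: "\<And>z. z \<in> Q \<Longrightarrow> prio t p q \<le> prio t p z" using am(2)[OF Suc.prems(1) ne] q_def by simp
  have "q \<noteq> y"
  proof
    assume "q = y"
    from Suc.prems(2) show False
    proof
      assume "Test a \<in> Q" then have "prio t p q \<le> t a" using qmin by (force simp: prio_def)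
      then show False using Suc.prems(3) \<open>q = y\<close> by simp
    next
      assume "Proc a \<in> Q" then have "prio t p q \<le> p a" using qmin by (force simp: prio_def)
      then show False using Suc.prems(4) \<open>q = y\<close> by simp
    qed
  qed
  show ?case
  proof (cases "q = Proc a")
    case True then show ?thesis using run \<open>q \<noteq> y\<close> by simp
  next
    case False
    have fin: "finite Q'" unfolding Q'_def using Suc.prems(1) by (auto split: oper.splits)
    have "Test a \<in> Q' \<or> Proc a \<in> Q'" using Suc.prems(2) False unfolding Q'_def
      by (auto split: oper.splits)
    moreover have "y \<in> set (sort1_run t p n Q')" using Suc.prems(5) run \<open>q \<noteq> y\<close> by simp
    ultimately have "Proc a \<in> set (takeWhile (\<lambda>q. q \<noteq> y) (sort1_run t p n Q'))"
      using Suc.IH[OF fin _ Suc.prems(3,4)] by blast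
    then show ?thesis using run \<open>q \<noteq> y\<close> by simp
  qed
qed

lemma runB:
  assumes "finite Q" "\<forall>x. Test x \<in> Q \<longrightarrow> Proc x \<notin> Q"
  shows "distinct (sort1_run t p n Q) \<and> set (sort1_run t p n Q) \<subseteq> Q \<union> Proc ` {x. Test x \<in> Q}"
  using assms
proof (induction n arbitrary: Q)
  case 0 then show ?case by simp
next
  case (Suc n)
  show ?case
  proof (cases "Q = {}")
    case True then show ?thesis by simp
  next
    case ne: False
  define q where "q = (ARG_MIN (prio t p) x. x \<in> Q)"
  define Q' where "Q' = (Q - {q}) \<union> (case q of Test j \<Rightarrow> {Proc j} | Proc j \<Rightarrow> {})"
  have run: "sort1_run t p (Suc n) Q = q # sort1_run t p n Q'"
    using ne by (simp add: q_def Q'_def Let_def)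
  have qQ: "q \<in> Q" using am(1)[OF Suc.prems(1) ne] q_def by simp
    have fin: "finite Q'" unfolding Q'_def using Suc.prems(1) by (auto split: oper.splits)
    have inv: "\<forall>x. Test x \<in> Q' \<longrightarrow> Proc x \<notin> Q'" using Suc.prems(2) unfolding Q'_def
      by (auto split: oper.splits)
    have IH: "distinct (sort1_run t p n Q') \<and> set (sort1_run t p n Q') \<subseteq> Q' \<union> Proc ` {x. Test x \<in> Q'}"
      using Suc.IH[OF fin inv] .
    have sub: "Q' \<union> Proc ` {x. Test x \<in> Q'} \<subseteq> Q \<union> Proc ` {x. Test x \<in> Q}"
      using qQ unfolding Q'_def by (auto split: oper.splits)
    have nq: "q \<notin> Q' \<union> Proc ` {x. Test x \<in> Q'}"
      using qQ Suc.prems(2) unfolding Q'_def by (auto split: oper.splits)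
    show ?thesis using IH sub nq qQ run by auto
  qed
qed

lemma tw_order:
  "x \<in> set (takeWhile (\<lambda>q. q \<noteq> y) L) \<Longrightarrow> y \<notin> set (takeWhile (\<lambda>q. q \<noteq> x) L)"
proof (induction L)
  case (Cons a L)
  then show ?case
    by (cases "a = y"; cases "a = x"; simp only: takeWhile.simps if_True if_False list.set simp_thms Un_iff insert_iff empty_iff; blast)
qed simp

lemma sum_bound:
  assumes "distinct xs" "set xs \<subseteq> S" "finite S" "\<forall>x\<in>S. f x \<ge> (0::real)"
  shows "sum_list (map f xs) \<le> sum f S"
  using assms by (simp add: sum_list_distinct_conv_sum_set) (rule sum_mono2, auto)

lemma pair_bound:
  assumes fin: "finite J" and nn: "\<forall>x\<in>J. t x \<ge> 0 \<and> p x \<ge> 0"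
    and aJ: "a \<in> J" and bJ: "b \<in> J" and ab: "a \<noteq> b"
    and tp: "t a < p a" and pp: "p a < p b"
  shows "dd J t p b a \<le> t b" "dd J t p a b \<le> t a + p a"
proof -
  define L where "L = sort1_schedule J t p"
  have B: "distinct L \<and> set L \<subseteq> Test ` J \<union> Proc ` {x. Test x \<in> Test ` J}"
    unfolding L_def sort1_schedule_def by (rule runB) (use fin in auto)
  have setL: "set L \<subseteq> Test ` J \<union> Proc ` J" using B by auto
  have dL: "distinct L" using B by auto
  have nPb: "Proc b \<notin> set (takeWhile (\<lambda>q. q \<noteq> Proc a) L)"
  proof (cases "Proc b \<in> set L")
    case True
    have "Proc a \<in> set (takeWhile (\<lambda>q. q \<noteq> Proc b) L)"
      unfolding L_def sort1_schedule_def
      by (rule runA) (use fin aJ tp pp True in \<open>auto simp: prio_def L_def sort1_schedule_def\<close>)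
    then show ?thesis by (rule tw_order)
  next
    case False then show ?thesis by (auto dest: set_takeWhileD)
  qed
  have s1: "set (filter (\<lambda>q. job q = b) (takeWhile (\<lambda>q. q \<noteq> Proc a) L)) \<subseteq> {Test b}"
    using nPb setL by (auto dest: set_takeWhileD)
  have "dd J t p b a \<le> sum (dur t p) {Test b}"
    unfolding dd_def L_def[symmetric]
    by (rule sum_bound) (use s1 dL nn bJ in auto)
  then show "dd J t p b a \<le> t b" by simp
  have s2: "set (filter (\<lambda>q. job q = a) (takeWhile (\<lambda>q. q \<noteq> Proc b) L)) \<subseteq> {Test a, Proc a}"
    using setL by (auto dest: set_takeWhileD)
  have "dd J t p a b \<le> sum (dur t p) {Test a, Proc a}"
    unfolding dd_def L_def[symmetric]
    by (rule sum_bound) (use s2 dL nn aJ in auto)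
  then show "dd J t p a b \<le> t a + p a" by simp
qed

lemma imb:
  fixes t p \<mu> \<nu> :: real
  assumes "t \<ge> 0" "p \<ge> 0" "t \<noteq> p" "\<mu> > 1" "\<nu> > 0" "\<mu> * \<nu> > 1"
    "max t p \<ge> \<mu> * min t p" "p \<ge> \<nu> * t"
  shows "t < p \<and> p \<ge> \<mu> * t"
proof (cases "t < p")
  case True then show ?thesis using assms(7) by (simp add: max_def min_def)
next
  case False
  then have tp: "t > p" using assms(3) by simp
  then have "t \<ge> \<mu> * p" using assms(7) by (simp add: max_def min_def)
  moreover have "\<mu> * p \<ge> \<mu> * (\<nu> * t)" using assms(8) assms(4) by (intro mult_left_mono) auto
  moreover have "(\<mu> * \<nu>) * t > 1 * t" using tp assms(2) assms(6) by (intro mult_strict_right_mono) auto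
  ultimately show ?thesis by (simp add: mult.assoc)
qed

lemma arith_fin:
  fixes ta pa tb pb M \<mu> \<nu> D :: real
  assumes "ta \<le> M" "tb \<le> M" "ta \<ge> \<nu> * M" "tb \<ge> \<nu> * M" "pa \<ge> \<mu> * ta" "pb \<ge> \<mu> * tb"
    "pa < pb" "\<mu> > 1" "\<nu> > 0" "D \<le> ta + pa + tb"
  shows "D \<le> (1 + 1 / (\<nu> * (\<mu> + 1))) * min (ta + pa) (tb + pb)"
proof -
  define m where "m = min (ta + pa) (tb + pb)"
  have h1: "D \<le> m + M" using assms(1,2,7,10) unfolding m_def by (auto simp: min_def)
  have "(1 + \<mu>) * ta \<ge> (1 + \<mu>) * (\<nu> * M)" using assms(3,8) by (intro mult_left_mono) auto
  moreover have "(1 + \<mu>) * tb \<ge> (1 + \<mu>) * (\<nu> * M)" using assms(4,8) by (intro mult_left_mono) auto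
  ultimately have "m \<ge> (\<nu> * (\<mu> + 1)) * M" unfolding m_def using assms(5,6)
    by (auto simp: algebra_simps min_def)
  moreover have pos: "\<nu> * (\<mu> + 1) > 0" using assms(8,9) by simp
  ultimately have "M \<le> m / (\<nu> * (\<mu> + 1))" by (simp add: pos_le_divide_eq mult.commute)
  then have "D \<le> m + m / (\<nu> * (\<mu> + 1))" using h1 by simp
  also have "\<dots> = (1 + 1 / (\<nu> * (\<mu> + 1))) * m" by (simp add: algebra_simps)
  finally show ?thesis unfolding m_def .
qed

theorem mainTheorem10:
  fixes J :: "'a set" and t p :: "'a \<Rightarrow> real" and \<mu> \<nu> :: real and i j k s :: 'a
  assumes "finite J"
    and "\<forall>x\<in>J. t x \<ge> 0 \<and> p x \<ge> 0"
    and "general_position J t p"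
    and "\<mu> > 1" and "0 < \<nu>" and "\<nu> < 1" and "\<mu> * \<nu> > 1"
    and "1 + 1 / \<mu> \<le> \<nu> + \<nu>\<^sup>2"
    and "i \<in> J" "j \<in> J" "k \<in> J" "s \<in> J"
    and "distinct [i, j, k, s]"
    and "red_pair \<mu> \<nu> t p i k" "red_pair \<mu> \<nu> t p j k"
    and "red_pair \<mu> \<nu> t p s i" "red_pair \<mu> \<nu> t p s j"
  shows "DD J t p i j \<le> (1 + 1 / (\<nu> * (\<mu> + 1))) * Dstar t p i j"
proof -
  define M where "M = max (t s) (p s)"
  have gp: "t i \<noteq> p i" "t j \<noteq> p j" "p i \<noteq> p j"
    using assms(3,9,10,13) unfolding general_position_def by auto
  have nn: "t i \<ge> 0" "p i \<ge> 0" "t j \<ge> 0" "p j \<ge> 0" using assms(2,9,10) by auto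
  have ri: "t i \<le> M" "t i \<ge> \<nu> * M" "p i \<ge> \<nu> * t i"
    using assms(16) unfolding red_pair_def M_def by auto
  have rj: "t j \<le> M" "t j \<ge> \<nu> * M" "p j \<ge> \<nu> * t j"
    using assms(17) unfolding red_pair_def M_def by auto
  have ii: "max (t i) (p i) \<ge> \<mu> * min (t i) (p i)"
    using assms(14) unfolding red_pair_def imbalanced_def by auto
  have ij: "max (t j) (p j) \<ge> \<mu> * min (t j) (p j)"
    using assms(15) unfolding red_pair_def imbalanced_def by auto
  have Ii: "t i < p i \<and> p i \<ge> \<mu> * t i"
    by (rule imb) (use nn gp ri ii assms(4,5,7) in auto)
  have Ij: "t j < p j \<and> p j \<ge> \<mu> * t j"
    by (rule imb) (use nn gp rj ij assms(4,5,7) in auto)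
  have ne: "i \<noteq> j" using assms(13) by auto
  show ?thesis
  proof (cases "p i < p j")
    case True
    have "dd J t p j i \<le> t j" "dd J t p i j \<le> t i + p i"
      using pair_bound[OF assms(1,2,9,10) ne] Ii True by auto
    then have "DD J t p i j \<le> t i + p i + t j" unfolding DD_def by simp
    then show ?thesis unfolding Dstar_def
      by (rule arith_fin[rotated 9]) (use ri rj Ii Ij True assms(4,5) in auto)
  next
    case False
    then have F: "p j < p i" using gp(3) by simp
    have "dd J t p i j \<le> t i" "dd J t p j i \<le> t j + p j"
      using pair_bound[OF assms(1,2,10,9) ne[symmetric]] Ij F by auto
    then have "DD J t p i j \<le> t j + p j + t i" unfolding DD_def by simp
    then have "DD J t p i j \<le> (1 + 1 / (\<nu> * (\<mu> + 1))) * min (t j + p j) (t i + p i)"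
      by (rule arith_fin[rotated 9]) (use ri rj Ii Ij F assms(4,5) in auto)
    then show ?thesis unfolding Dstar_def by (simp add: min.commute)
  qed
qed

end
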